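(* For any complex numbers $a,b,\alpha,\beta,\theta$ with $\beta a-\alpha b\neq0$ and any natural number $n\ge1$, \[ \sum_{r=0}^{\lfloor n/2\rfloor}\Psi\left(\begin{array}{cc|c} a & b & n \\ \alpha & \beta & r \end{array}\right)\theta^r=\Psi(a-\alpha\theta,b-\beta\theta,n),\qquad \sum_{r=0}^{\lfloor (n-1)/2\rfloor}\Phi\left(\begin{array}{cc|c} a & b & n \\ \alpha & \beta & r \end{array}\right)\theta^r=\Phi(a-\alpha\theta,b-\beta\theta,n). \]
   Context: $\delta(m)=1$ for $m$ odd, $0$ for $m$ even; $\lfloor\cdot\rfloor$ is the floor. $\Psi(a,b,n)$, $\Phi(a,b,n)$ are defined by $\Psi(a,b,0)=2$, $\Psi(a,b,1)=1$, $\Psi(a,b,n+1)=(2a-b)^{\delta(n)}\Psi(a,b,n)-a\Psi(a,b,n-1)$ and $\Phi(a,b,0)=0$, $\Phi(a,b,1)=1$, $\Phi(a,b,n+1)=(2a-b)^{\delta(n+1)}\Phi(a,b,n)-a\Phi(a,b,n-1)$. For $n\ge1$ and numbers with $\beta a-\alpha b\ne0$, $\Psi\left(\begin{array}{cc|c} a & b & n \\ \alpha & \beta & r \end{array}\right)$ ($0\le r\le\lfloor n/2\rfloor$) and $\Phi\left(\begin{array}{cc|c} a & b & n \\ \alpha & \beta & r \end{array}\right)$ ($0\le r\le\lfloor (n-1)/2\rfloor$) are the unique numbers such that, identically in $x,y$, $(\beta a-\alpha b)^{\lfloor n/2\rfloor}\frac{x^n+y^n}{(x+y)^{\delta(n)}}=\sum_{r}\Psi\left(\begin{array}{cc|c}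 a & b & n \\ \alpha & \beta & r \end{array}\right)(\alpha x^2+\beta xy+\alpha y^2)^{\lfloor n/2\rfloor-r}(ax^2+bxy+ay^2)^r$ and $(\beta a-\alpha b)^{\lfloor (n-1)/2\rfloor}\frac{x^n-y^n}{(x-y)(x+y)^{\delta(n-1)}}=\sum_{r}\Phi\left(\begin{array}{cc|c} a & b & n \\ \alpha & \beta & r \end{array}\right)(\alpha x^2+\beta xy+\alpha y^2)^{\lfloor (n-1)/2\rfloor-r}(ax^2+bxy+ay^2)^r$. *)

theory Defs
  imports Complex_Main
begin

definition delta :: "nat \<Rightarrow> nat" where
  "delta m = (if odd m then 1 else 0)"

fun Psi :: "complex \<Rightarrow> complex \<Rightarrow> nat \<Rightarrow> complex" where
  "Psi a b 0 = 2"
| "Psi a b (Suc 0) = 1"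
| "Psi a b (Suc (Suc m)) = (2*a - b) ^ delta (Suc m) * Psi a b (Suc m) - a * Psi a b m"

fun Phi :: "complex \<Rightarrow> complex \<Rightarrow> nat \<Rightarrow> complex" where
  "Phi a b 0 = 0"
| "Phi a b (Suc 0) = 1"
| "Phi a b (Suc (Suc m)) = (2*a - b) ^ delta (Suc (Suc m)) * Phi a b (Suc m) - a * Phi a b m"

definition Psi_coef :: "complex \<Rightarrow> complex \<Rightarrow> complex \<Rightarrow> complex \<Rightarrow> nat \<Rightarrow> nat \<Rightarrow> complex" where
  "Psi_coef a b \<alpha> \<beta> n = (THE c. (\<forall>r. n div 2 < r \<longrightarrow> c r = 0) \<and>
     (\<forall>x y. (x + y) ^ delta n \<noteq> 0 \<longrightarrow>
        (\<beta>*a - \<alpha>*b) ^ (n div 2) * (x^n + y^n) / (x + y) ^ delta n =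
        (\<Sum>r = 0..n div 2. c r * (\<alpha>*x^2 + \<beta>*x*y + \<alpha>*y^2) ^ (n div 2 - r)
                               * (a*x^2 + b*x*y + a*y^2) ^ r)))"

definition Phi_coef :: "complex \<Rightarrow> complex \<Rightarrow> complex \<Rightarrow> complex \<Rightarrow> nat \<Rightarrow> nat \<Rightarrow> complex" where
  "Phi_coef a b \<alpha> \<beta> n = (THE c. (\<forall>r. (n - 1) div 2 < r \<longrightarrow> c r = 0) \<and>
     (\<forall>x y. (x - y) * (x + y) ^ delta (n - 1) \<noteq> 0 \<longrightarrow>
        (\<beta>*a - \<alpha>*b) ^ ((n - 1) div 2) * (x^n - y^n) / ((x - y) * (x + y) ^ delta (n - 1)) =
        (\<Sum>r = 0..(n - 1) div 2. c r * (\<alpha>*x^2 + \<beta>*x*y + \<alpha>*y^2) ^ ((n - 1) div 2 - r)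
                               * (a*x^2 + b*x*y + a*y^2) ^ r)))"

end

theory Submission
  imports Defs
begin


definition hom :: "nat \<Rightarrow> (complex \<Rightarrow> complex \<Rightarrow> complex) \<Rightarrow> bool" where
  "hom m f \<longleftrightarrow> (\<exists>c. \<forall>u v. f u v = (\<Sum>r = 0..m. c r * u^(m-r) * v^r))"

lemma hom_const: "hom 0 (\<lambda>u v. k)"
  unfolding hom_def by (rule exI[of _ "\<lambda>_. k"]) simp

lemma hom_diff: assumes "hom m f" "hom m g" shows "hom m (\<lambda>u v. f u v - g u v)"
proof -
  obtain c d where c: "\<And>u v. f u v = (\<Sum>r = 0..m. c r * u^(m-r) * v^r)"
    and d: "\<And>u v. g u v = (\<Sum>r = 0..m. d r * u^(m-r) * v^r)"
    using assms unfolding hom_def by metis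
  show ?thesis unfolding hom_def
    by (rule exI[of _ "\<lambda>r. c r - d r"]) (simp add: c d sum_subtractf[symmetric] algebra_simps)
qed

lemma hom_mult1: assumes "hom m f" shows "hom (Suc m) (\<lambda>u v. (g0*u + g1*v) * f u v)"
proof -
  obtain c where c: "\<And>u v. f u v = (\<Sum>r = 0..m. c r * u^(m-r) * v^r)"
    using assms unfolding hom_def by metis
  define e where "e r = g0 * (if r \<le> m then c r else 0) + g1 * (if r \<ge> 1 then c (r-1) else 0)" for r
  have "(\<Sum>r = 0..Suc m. e r * u^(Suc m-r) * v^r) = (g0*u + g1*v) * f u v" for u v
  proof -
    have "(\<Sum>r = 0..Suc m. e r * u^(Suc m-r) * v^r) =
      (\<Sum>r = 0..Suc m. g0 * (if r \<le> m then c r else 0) * u^(Suc m-r) * v^r)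
      + (\<Sum>r = 0..Suc m. g1 * (if r \<ge> 1 then c (r-1) else 0) * u^(Suc m-r) * v^r)"
      unfolding e_def by (simp add: algebra_simps sum.distrib)
    also have "(\<Sum>r = 0..Suc m. g0 * (if r \<le> m then c r else 0) * u^(Suc m-r) * v^r)
       = (\<Sum>r = 0..m. g0 * c r * u^(Suc m-r) * v^r)"
      by (simp add: sum.atLeast0_atMost_Suc)
    also have "\<dots> = g0 * u * f u v"
      by (simp add: c sum_distrib_left Suc_diff_le algebra_simps)
    also have "(\<Sum>r = 0..Suc m. g1 * (if r \<ge> 1 then c (r-1) else 0) * u^(Suc m-r) * v^r)
       = (\<Sum>r = 0..m. g1 * c r * u^(m-r) * v^(Suc r))"
      by (subst sum.atLeast0_atMost_Suc_shift) simp
    also have "\<dots> = g1 * v * f u v"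
      by (simp add: c sum_distrib_left algebra_simps)
    finally show ?thesis by (simp add: algebra_simps)
  qed
  then show ?thesis unfolding hom_def by metis
qed

lemma hom_cong: "hom m f \<Longrightarrow> m = k \<Longrightarrow> (\<And>u v. g u v = f u v) \<Longrightarrow> hom k g"
  unfolding hom_def by metis

lemma delta_simps: "even m \<Longrightarrow> delta m = 0" "odd m \<Longrightarrow> delta m = 1"
  by (auto simp: delta_def)

lemma Psi_hom: "hom (n div 2) (\<lambda>u v. Psi (a*u - \<alpha>*v) (b*u - \<beta>*v) n)"
proof (induction n rule: less_induct)
  case (less n)
  show ?case
  proof (cases n)
    case 0 then show ?thesis using hom_const[of 2] by simp
  next
    case (Suc k)
    show ?thesis
    proof (cases k)
      case 0 then show ?thesis using Suc hom_const[of 1] by simp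
    next
      case (Suc m)
      have IH1: "hom (Suc m div 2) (\<lambda>u v. Psi (a*u - \<alpha>*v) (b*u - \<beta>*v) (Suc m))"
        using less Suc \<open>n = Suc k\<close> by simp
      have IH0: "hom (m div 2) (\<lambda>u v. Psi (a*u - \<alpha>*v) (b*u - \<beta>*v) m)"
        using less Suc \<open>n = Suc k\<close> by simp
      have h2: "hom (Suc (m div 2)) (\<lambda>u v. (a*u + (-\<alpha>)*v) * Psi (a*u - \<alpha>*v) (b*u - \<beta>*v) m)"
        by (rule hom_mult1[OF IH0])
      have h2': "hom (Suc (Suc m) div 2) (\<lambda>u v. (a*u + (-\<alpha>)*v) * Psi (a*u - \<alpha>*v) (b*u - \<beta>*v) m)"
        by (rule hom_cong[OF h2]) auto
      show ?thesis
      proof (cases "even m")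
        case True
        have h1: "hom (Suc (Suc m div 2)) (\<lambda>u v. ((2*a-b)*u + (-(2*\<alpha>-\<beta>))*v) * Psi (a*u - \<alpha>*v) (b*u - \<beta>*v) (Suc m))"
          by (rule hom_mult1[OF IH1])
        have h1': "hom (Suc (Suc m) div 2) (\<lambda>u v. ((2*a-b)*u + (-(2*\<alpha>-\<beta>))*v) * Psi (a*u - \<alpha>*v) (b*u - \<beta>*v) (Suc m))"
          by (rule hom_cong[OF h1]) (use True in auto)
        show ?thesis
          apply (rule hom_cong[OF hom_diff[OF h1' h2']])
          using True \<open>n = Suc k\<close> Suc by (auto simp: delta_simps algebra_simps)
      next
        case False
        have h1': "hom (Suc (Suc m) div 2) (\<lambda>u v. Psi (a*u - \<alpha>*v) (b*u - \<beta>*v) (Suc m))"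
          by (rule hom_cong[OF IH1]) (use False in auto)
        show ?thesis
          apply (rule hom_cong[OF hom_diff[OF h1' h2']])
          using False \<open>n = Suc k\<close> Suc by (auto simp: delta_simps algebra_simps)
      qed
    qed
  qed
qed


lemma Phi_hom: "hom ((n - 1) div 2) (\<lambda>u v. Phi (a*u - \<alpha>*v) (b*u - \<beta>*v) n)"
proof (induction n rule: less_induct)
  case (less n)
  show ?case
  proof (cases n)
    case 0 then show ?thesis using hom_const[of 0] by simp
  next
    case (Suc k)
    show ?thesis
    proof (cases k)
      case 0 then show ?thesis using Suc hom_const[of 1] by simp
    next
      case (Suc m)
      show ?thesis
      proof (cases "m = 0")
        case True
        then show ?thesis using Suc \<open>n = Suc k\<close> hom_const[of 1] by (simp add: delta_def)
      next
        case m0: False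
      have IH1: "hom (m div 2) (\<lambda>u v. Phi (a*u - \<alpha>*v) (b*u - \<beta>*v) (Suc m))"
        using less.IH[of "Suc m"] Suc \<open>n = Suc k\<close> by simp
      have IH0: "hom ((m - 1) div 2) (\<lambda>u v. Phi (a*u - \<alpha>*v) (b*u - \<beta>*v) m)"
        using less Suc \<open>n = Suc k\<close> by simp
      have h2: "hom (Suc ((m - 1) div 2)) (\<lambda>u v. (a*u + (-\<alpha>)*v) * Phi (a*u - \<alpha>*v) (b*u - \<beta>*v) m)"
        by (rule hom_mult1[OF IH0])
      have h2': "hom ((Suc (Suc m) - 1) div 2) (\<lambda>u v. (a*u + (-\<alpha>)*v) * Phi (a*u - \<alpha>*v) (b*u - \<beta>*v) m)"
        by (rule hom_cong[OF h2]) (use m0 in auto)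
      show ?thesis
      proof (cases "odd m")
        case True
        have h1: "hom (Suc (m div 2)) (\<lambda>u v. ((2*a-b)*u + (-(2*\<alpha>-\<beta>))*v) * Phi (a*u - \<alpha>*v) (b*u - \<beta>*v) (Suc m))"
          by (rule hom_mult1[OF IH1])
        have h1': "hom ((Suc (Suc m) - 1) div 2) (\<lambda>u v. ((2*a-b)*u + (-(2*\<alpha>-\<beta>))*v) * Phi (a*u - \<alpha>*v) (b*u - \<beta>*v) (Suc m))"
          by (rule hom_cong[OF h1]) (use True in auto)
        show ?thesis
          apply (rule hom_cong[OF hom_diff[OF h1' h2']])
          using True \<open>n = Suc k\<close> Suc by (auto simp: delta_simps algebra_simps)
      next
        case False
        have h1': "hom ((Suc (Suc m) - 1) div 2) (\<lambda>u v. Phi (a*u - \<alpha>*v) (b*u - \<beta>*v) (Suc m))"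
          by (rule hom_cong[OF IH1]) (use False in auto)
        show ?thesis
          apply (rule hom_cong[OF hom_diff[OF h1' h2']])
          using False \<open>n = Suc k\<close> Suc by (auto simp: delta_simps algebra_simps)
      qed
      qed
    qed
  qed
qed

lemma Psi_scale: "Psi (l*a) (l*b) n = l^(n div 2) * Psi a b n"
proof (induction a b n rule: Psi.induct)
  case (3 a b m)
  show ?case
  proof (cases "even m")
    case True
    then obtain k where k: "m = 2*k" by blast
    show ?thesis using 3 True by (simp add: k delta_simps algebra_simps)
  next
    case False
    then obtain k where k: "m = 2*k+1" using oddE by blast
    show ?thesis using 3 False by (simp add: k delta_simps algebra_simps)
  qed
qed auto

lemma Phi_scale: "Phi (l*a) (l*b) n = l^((n - 1) div 2) * Phi a b n"
proof (induction a b n rule: Phi.induct)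
  case (3 a b m)
  show ?case
  proof (cases "even m")
    case True
    then obtain k where k: "m = 2*k" by blast
    show ?thesis
    proof (cases k)
      case 0 then show ?thesis by (simp add: k delta_def)
    next
      case (Suc j)
      have i1: "Phi (l*a) (l*b) (Suc m) = l^(m div 2) * Phi a b (Suc m)" using 3 by simp
      have i0: "Phi (l*a) (l*b) m = l^((m - 1) div 2) * Phi a b m" using 3 by simp
      show ?thesis apply (simp only: Phi.simps i1 i0) using True by (simp add: k Suc delta_simps algebra_simps)
    qed
  next
    case False
    then obtain k where k: "m = 2*k+1" using oddE by blast
      have i1: "Phi (l*a) (l*b) (Suc m) = l^(m div 2) * Phi a b (Suc m)" using 3 by simp
      have i0: "Phi (l*a) (l*b) m = l^((m - 1) div 2) * Phi a b m" using 3 by simp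
      show ?thesis apply (simp only: Phi.simps i1 i0) using False by (simp add: k delta_simps algebra_simps)
  qed
qed auto

lemma Psi_xy: "Psi (x*y) (-(x^2+y^2)) n * (x+y)^delta n = x^n + y^n"
proof (induction n rule: less_induct)
  case (less n)
  show ?case
  proof (cases n)
    case 0 then show ?thesis by (simp add: delta_def)
  next
    case (Suc k)
    show ?thesis
    proof (cases k)
      case 0 then show ?thesis using Suc by (simp add: delta_def)
    next
      case (Suc m)
      have IH1: "Psi (x*y) (-(x^2+y^2)) (Suc m) * (x+y)^delta (Suc m) = x^Suc m + y^Suc m"
        using less Suc \<open>n = Suc k\<close> by simp
      have IH0: "Psi (x*y) (-(x^2+y^2)) m * (x+y)^delta m = x^m + y^m"
        using less Suc \<open>n = Suc k\<close> by simp
      have e: "2 * (x*y) - - (x^2+y^2) = (x+y)^2" by (simp add: power2_eq_square algebra_simps)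
      show ?thesis
      proof (cases "even m")
        case True
        have "Psi (x*y) (-(x^2+y^2)) n * (x+y)^delta n
          = (x+y) * (Psi (x*y) (-(x^2+y^2)) (Suc m) * (x+y)^delta (Suc m)) - x*y*(Psi (x*y) (-(x^2+y^2)) m * (x+y)^delta m)"
          using True \<open>n = Suc k\<close> Suc by (simp add: delta_simps e power2_eq_square algebra_simps)
        also have "\<dots> = x^n + y^n" unfolding IH1 IH0 using \<open>n = Suc k\<close> Suc
          by (simp add: algebra_simps)
        finally show ?thesis .
      next
        case False
        have "Psi (x*y) (-(x^2+y^2)) n * (x+y)^delta n
          = (x+y) * (Psi (x*y) (-(x^2+y^2)) (Suc m) * (x+y)^delta (Suc m)) - x*y*(Psi (x*y) (-(x^2+y^2)) m * (x+y)^delta m)"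
          using False \<open>n = Suc k\<close> Suc by (simp add: delta_simps e power2_eq_square algebra_simps)
        also have "\<dots> = x^n + y^n" unfolding IH1 IH0 using \<open>n = Suc k\<close> Suc
          by (simp add: algebra_simps)
        finally show ?thesis .
      qed
    qed
  qed
qed

lemma Phi_xy: "Phi (x*y) (-(x^2+y^2)) n * ((x-y) * (x+y)^delta (n - 1)) = x^n - y^n"
proof (induction n rule: less_induct)
  case (less n)
  show ?case
  proof (cases n)
    case 0 then show ?thesis by (simp add: delta_def)
  next
    case (Suc k)
    show ?thesis
    proof (cases k)
      case 0 then show ?thesis using Suc by (simp add: delta_def)
    next
      case (Suc m)
      have IH1: "Phi (x*y) (-(x^2+y^2)) (Suc m) * ((x-y) * (x+y)^delta m) = x^Suc m - y^Suc m"
        using less.IH[of "Suc m"] Suc \<open>n = Suc k\<close> by simp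
      have IH0: "Phi (x*y) (-(x^2+y^2)) m * ((x-y) * (x+y)^delta (m - 1)) = x^m - y^m"
        using less Suc \<open>n = Suc k\<close> by simp
      have e: "2 * (x*y) - - (x^2+y^2) = (x+y)^2" by (simp add: power2_eq_square algebra_simps)
      show ?thesis
      proof (cases "even m")
        case True
        show ?thesis
        proof (cases "m = 0")
          case True then show ?thesis using \<open>n = Suc k\<close> Suc by (simp add: delta_def power2_eq_square algebra_simps)
        next
          case False
          then have dm: "delta (m - 1) = 1" using \<open>even m\<close> by (simp add: delta_def)
        have "Phi (x*y) (-(x^2+y^2)) n * ((x-y) * (x+y)^delta (n - 1))
          = (x+y) * (Phi (x*y) (-(x^2+y^2)) (Suc m) * ((x-y) * (x+y)^delta m)) - x*y*(Phi (x*y) (-(x^2+y^2)) m * ((x-y) * (x+y)^delta (m - 1)))"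
          using \<open>even m\<close> \<open>n = Suc k\<close> Suc dm by (simp add: delta_simps e power2_eq_square algebra_simps)
        also have "\<dots> = x^n - y^n" unfolding IH1 IH0 using \<open>n = Suc k\<close> Suc
          by (simp add: algebra_simps)
        finally show ?thesis .
        qed
      next
        case False
        then have dm: "delta (m - 1) = 0" by (cases m) (auto simp: delta_def)
        have "Phi (x*y) (-(x^2+y^2)) n * ((x-y) * (x+y)^delta (n - 1))
          = (x+y) * (Phi (x*y) (-(x^2+y^2)) (Suc m) * ((x-y) * (x+y)^delta m)) - x*y*(Phi (x*y) (-(x^2+y^2)) m * ((x-y) * (x+y)^delta (m - 1)))"
          using False \<open>n = Suc k\<close> Suc dm by (simp add: delta_simps e power2_eq_square algebra_simps)
        also have "\<dots> = x^n - y^n" unfolding IH1 IH0 using \<open>n = Suc k\<close> Suc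
          by (simp add: algebra_simps)
        finally show ?thesis .
      qed
    qed
  qed
qed


lemma lin_roots_finite:
  fixes c0 c1 :: complex assumes "c0 \<noteq> 0 \<or> c1 \<noteq> 0"
  shows "finite {t. c0 + c1 * t = 0}"
proof (cases "c1 = 0")
  case True then show ?thesis using assms by simp
next
  case False
  then have "{t. c0 + c1 * t = 0} \<subseteq> {-c0/c1}" by (auto simp: field_simps add_eq_0_iff2)
  then show ?thesis using finite_subset by blast
qed

lemma BA_eq:
  fixes a b \<alpha> \<beta> x y :: complex
  shows "a*(\<alpha>*x^2+\<beta>*x*y+\<alpha>*y^2) - \<alpha>*(a*x^2+b*x*y+a*y^2) = (\<beta>*a - \<alpha>*b) * (x*y)"
    and "b*(\<alpha>*x^2+\<beta>*x*y+\<alpha>*y^2) - \<beta>*(a*x^2+b*x*y+a*y^2) = (\<beta>*a - \<alpha>*b) * (-(x^2+y^2))"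
  by (simp_all add: algebra_simps power2_eq_square)

lemma coef_unique:
  fixes e :: "nat \<Rightarrow> complex"
  assumes D: "\<beta>*a - \<alpha>*b \<noteq> 0"
    and H: "\<And>x y. x + y \<noteq> 0 \<Longrightarrow> x - y \<noteq> 0 \<Longrightarrow>
      (\<Sum>r = 0..m. e r * (\<alpha>*x^2+\<beta>*x*y+\<alpha>*y^2)^(m-r) * (a*x^2+b*x*y+a*y^2)^r) = 0"
  shows "\<forall>r\<le>m. e r = 0"
proof -
  define Dd where "Dd = \<beta>*a - \<alpha>*b"
  define F where "F = {t. (2*a - b) + (\<beta> - 2*\<alpha>) * t = 0} \<union> {t. (-(2*a) - b) + (\<beta> + 2*\<alpha>) * t = 0}"
  have fin: "finite F" unfolding F_def
  proof (intro finite_UnI lin_roots_finite)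
    show "2 * a - b \<noteq> 0 \<or> \<beta> - 2 * \<alpha> \<noteq> 0"
    proof (rule ccontr)
      assume "\<not> ?thesis" then have "b = 2*a" "\<beta> = 2*\<alpha>" by auto
      then show False using D by (simp add: algebra_simps)
    qed
    show "- (2 * a) - b \<noteq> 0 \<or> \<beta> + 2 * \<alpha> \<noteq> 0"
    proof (rule ccontr)
      assume "\<not> ?thesis" then have "b = -2*a" "\<beta> = -2*\<alpha>" by (auto simp: algebra_simps add_eq_0_iff2)
      then show False using D by (simp add: algebra_simps)
    qed
  qed
  have Z: "(\<Sum>r\<le>m. e r * t^r) = 0" if t: "t \<notin> F" for t
  proof -
    define q where "q = (a - \<alpha>*t)/Dd"
    define w where "w = -(b - \<beta>*t)/Dd"
    have Dd0: "Dd \<noteq> 0" using D Dd_def by simp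
    have wp: "w + 2*q \<noteq> 0"
    proof
      assume "w + 2*q = 0"
      moreover have "w + 2*q = (-(b - \<beta>*t) + 2*(a - \<alpha>*t))/Dd" unfolding w_def q_def
        using Dd0 by (simp add: diff_divide_distrib add_divide_distrib)
      ultimately have "-(b - \<beta>*t) + 2*(a - \<alpha>*t) = 0" using Dd0 by simp
      then have "(2*a - b) + (\<beta> - 2*\<alpha>) * t = 0" by (simp add: algebra_simps)
      then show False using t F_def by auto
    qed
    have wm: "w - 2*q \<noteq> 0"
    proof
      assume "w - 2*q = 0"
      moreover have "w - 2*q = (-(b - \<beta>*t) - 2*(a - \<alpha>*t))/Dd" unfolding w_def q_def
        using Dd0 by (simp add: diff_divide_distrib add_divide_distrib)
      ultimately have "-(b - \<beta>*t) - 2*(a - \<alpha>*t) = 0" using Dd0 by simp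
      then have "(-(2*a) - b) + (\<beta> + 2*\<alpha>) * t = 0" by (simp add: algebra_simps)
      then show False using t F_def by auto
    qed
    define s where "s = csqrt (w + 2*q)"
    define d where "d = csqrt (w - 2*q)"
    define x where "x = (s + d)/2"
    define y where "y = (s - d)/2"
    have s2: "s^2 = w + 2*q" and d2: "d^2 = w - 2*q" unfolding s_def d_def by simp_all
    have xy1: "x + y = s" "x - y = d" unfolding x_def y_def by (simp_all add: field_simps)
    have xs0: "x + y \<noteq> 0" using xy1 s_def wp by simp
    have xd0: "x - y \<noteq> 0" using xy1 d_def wm by simp
    have xyq: "x*y = q"
    proof -
      have "4*(x*y) = s^2 - d^2" unfolding x_def y_def by (simp add: power2_eq_square field_simps)
      then show ?thesis using s2 d2 by simp
    qed
    have xyw: "-(x^2+y^2) = -w"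
    proof -
      have "2*(x^2+y^2) = s^2 + d^2" unfolding x_def y_def by (simp add: power2_eq_square field_simps)
      then have "2*(x^2+y^2) = 2*w" using s2 d2 by simp
      then have "x^2+y^2 = w" by (metis mult_cancel_left zero_neq_numeral)
      then show ?thesis by simp
    qed
    define BB where "BB = \<alpha>*x^2+\<beta>*x*y+\<alpha>*y^2"
    define AA where "AA = a*x^2+b*x*y+a*y^2"
    have f1: "a*BB - \<alpha>*AA = Dd*(x*y)" unfolding BB_def AA_def Dd_def by (simp add: algebra_simps power2_eq_square)
    have f2: "b*BB - \<beta>*AA = Dd*(-(x^2+y^2))" unfolding BB_def AA_def Dd_def by (simp add: algebra_simps power2_eq_square)
    have e1: "a*BB - \<alpha>*AA = a - \<alpha>*t" unfolding f1 xyq q_def using Dd0 by simp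
    have e2: "b*BB - \<beta>*AA = b - \<beta>*t" unfolding f2 xyw w_def using Dd0 by simp
    have "Dd * BB = Dd * 1"
    proof -
      have "\<beta>*(a*BB - \<alpha>*AA) - \<alpha>*(b*BB - \<beta>*AA) = \<beta>*(a - \<alpha>*t) - \<alpha>*(b - \<beta>*t)" using e1 e2 by simp
      then show ?thesis unfolding Dd_def by (simp add: algebra_simps)
    qed
    then have BB1: "BB = 1" using Dd0 by simp
    have "Dd * AA = Dd * t"
    proof -
      have "b*(a*BB - \<alpha>*AA) - a*(b*BB - \<beta>*AA) = b*(a - \<alpha>*t) - a*(b - \<beta>*t)" using e1 e2 by simp
      then show ?thesis unfolding Dd_def by (simp add: algebra_simps)
    qed
    then have AAt: "AA = t" using Dd0 by simp
    have "(\<Sum>r = 0..m. e r * BB^(m-r) * AA^r) = 0" using H[OF xs0 xd0] unfolding BB_def AA_def .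
    then show ?thesis unfolding BB1 AAt by (simp add: atLeast0AtMost)
  qed
  have "infinite (UNIV - F)" using fin infinite_UNIV_char_0 by (metis Diff_infinite_finite)
  moreover have "UNIV - F \<subseteq> {t. (\<Sum>r\<le>m. e r * t^r) = 0}" using Z by auto
  ultimately have "infinite {t. (\<Sum>r\<le>m. e r * t^r) = 0}" using finite_subset by blast
  then show ?thesis using polyfun_finite_roots by blast
qed


lemma main_Psi:
  fixes a b \<alpha> \<beta> \<theta> :: complex
  assumes D: "\<beta>*a - \<alpha>*b \<noteq> 0"
  shows "(\<Sum>r = 0..n div 2. Psi_coef a b \<alpha> \<beta> n r * \<theta>^r) = Psi (a - \<alpha>*\<theta>) (b - \<beta>*\<theta>) n"
proof -
  define m where "m = n div 2"
  obtain c where c: "\<And>u v. Psi (a*u - \<alpha>*v) (b*u - \<beta>*v) n = (\<Sum>r = 0..m. c r * u^(m-r) * v^r)"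
    using Psi_hom[of n a \<alpha> b \<beta>] unfolding hom_def m_def by metis
  define c' where "c' r = (if r \<le> m then c r else 0)" for r
  define P where "P = (\<lambda>c. (\<forall>r. n div 2 < r \<longrightarrow> c r = 0) \<and>
     (\<forall>x y. (x + y) ^ delta n \<noteq> 0 \<longrightarrow>
        (\<beta>*a - \<alpha>*b) ^ (n div 2) * (x^n + y^n) / (x + y) ^ delta n =
        (\<Sum>r = 0..n div 2. c r * (\<alpha>*x^2 + \<beta>*x*y + \<alpha>*y^2) ^ (n div 2 - r)
                               * (a*x^2 + b*x*y + a*y^2) ^ r)))"
  have sumc': "(\<Sum>r = 0..m. c' r * (\<alpha>*x^2 + \<beta>*x*y + \<alpha>*y^2) ^ (m - r) * (a*x^2 + b*x*y + a*y^2) ^ r)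
      = (\<beta>*a - \<alpha>*b) ^ m * Psi (x*y) (-(x^2+y^2)) n" for x y
  proof -
    define BB where "BB = \<alpha>*x^2+\<beta>*x*y+\<alpha>*y^2"
    define AA where "AA = a*x^2+b*x*y+a*y^2"
    have f1: "a*BB - \<alpha>*AA = (\<beta>*a - \<alpha>*b)*(x*y)" unfolding BB_def AA_def by (simp add: algebra_simps power2_eq_square)
    have f2: "b*BB - \<beta>*AA = (\<beta>*a - \<alpha>*b)*(-(x^2+y^2))" unfolding BB_def AA_def by (simp add: algebra_simps power2_eq_square)
    have "(\<Sum>r = 0..m. c' r * BB ^ (m - r) * AA ^ r) = (\<Sum>r = 0..m. c r * BB ^ (m - r) * AA ^ r)"
      by (rule sum.cong) (auto simp: c'_def)
    also have "\<dots> = Psi (a*BB - \<alpha>*AA) (b*BB - \<beta>*AA) n" by (rule c[symmetric])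
    also have "\<dots> = (\<beta>*a - \<alpha>*b) ^ m * Psi (x*y) (-(x^2+y^2)) n"
      unfolding f1 f2 Psi_scale m_def ..
    finally show ?thesis unfolding BB_def AA_def .
  qed
  have Pc': "P c'"
    unfolding P_def m_def[symmetric]
  proof (intro conjI allI impI)
    fix r assume "m < r" then show "c' r = 0" by (simp add: c'_def)
  next
    fix x y :: complex assume h: "(x + y) ^ delta n \<noteq> 0"
    have "(\<beta>*a - \<alpha>*b) ^ m * (x^n + y^n) / (x + y) ^ delta n = (\<beta>*a - \<alpha>*b) ^ m * Psi (x*y) (-(x^2+y^2)) n"
    proof -
      have e: "x^n+y^n = Psi (x*y) (-(x^2+y^2)) n * (x+y)^delta n" by (rule Psi_xy[symmetric])
      show ?thesis unfolding e using h by (simp del: power_eq_0_iff)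
    qed
    then show "(\<beta>*a - \<alpha>*b) ^ m * (x^n + y^n) / (x + y) ^ delta n =
        (\<Sum>r = 0..m. c' r * (\<alpha>*x^2 + \<beta>*x*y + \<alpha>*y^2) ^ (m - r) * (a*x^2 + b*x*y + a*y^2) ^ r)"
      using sumc' by simp
  qed
  have uniq: "d = c'" if Pd: "P d" for d
  proof -
    have "\<forall>r\<le>m. d r - c' r = 0"
    proof (rule coef_unique[OF D])
      fix x y :: complex assume xy: "x + y \<noteq> 0" "x - y \<noteq> 0"
      then have h: "(x + y) ^ delta n \<noteq> 0" by simp
      have "(\<Sum>r = 0..m. d r * (\<alpha>*x^2 + \<beta>*x*y + \<alpha>*y^2) ^ (m - r) * (a*x^2 + b*x*y + a*y^2) ^ r)
          = (\<Sum>r = 0..m. c' r * (\<alpha>*x^2 + \<beta>*x*y + \<alpha>*y^2) ^ (m - r) * (a*x^2 + b*x*y + a*y^2) ^ r)"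
      proof -
        have "\<forall>x y. (x + y) ^ delta n \<noteq> 0 \<longrightarrow>
        (\<beta>*a - \<alpha>*b) ^ m * (x^n + y^n) / (x + y) ^ delta n =
        (\<Sum>r = 0..m. d r * (\<alpha>*x^2 + \<beta>*x*y + \<alpha>*y^2) ^ (m - r) * (a*x^2 + b*x*y + a*y^2) ^ r)"
          using Pd unfolding P_def m_def[symmetric] by (rule conjunct2)
        then have 1: "(\<beta>*a - \<alpha>*b) ^ m * (x^n + y^n) / (x + y) ^ delta n =
        (\<Sum>r = 0..m. d r * (\<alpha>*x^2 + \<beta>*x*y + \<alpha>*y^2) ^ (m - r) * (a*x^2 + b*x*y + a*y^2) ^ r)"
          using h by blast
        have "\<forall>x y. (x + y) ^ delta n \<noteq> 0 \<longrightarrow>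
        (\<beta>*a - \<alpha>*b) ^ m * (x^n + y^n) / (x + y) ^ delta n =
        (\<Sum>r = 0..m. c' r * (\<alpha>*x^2 + \<beta>*x*y + \<alpha>*y^2) ^ (m - r) * (a*x^2 + b*x*y + a*y^2) ^ r)"
          using Pc' unfolding P_def m_def[symmetric] by (rule conjunct2)
        then have 2: "(\<beta>*a - \<alpha>*b) ^ m * (x^n + y^n) / (x + y) ^ delta n =
        (\<Sum>r = 0..m. c' r * (\<alpha>*x^2 + \<beta>*x*y + \<alpha>*y^2) ^ (m - r) * (a*x^2 + b*x*y + a*y^2) ^ r)"
          using h by blast
        show ?thesis using 1 2 by simp
      qed
      then show "(\<Sum>r = 0..m. (d r - c' r) * (\<alpha>*x^2 + \<beta>*x*y + \<alpha>*y^2) ^ (m - r) * (a*x^2 + b*x*y + a*y^2) ^ r) = 0"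
        by (simp add: algebra_simps sum_subtractf)
    qed
    moreover have "\<forall>r>m. d r = 0" using Pd unfolding P_def m_def by simp
    ultimately show ?thesis by (auto simp: c'_def fun_eq_iff not_le)
  qed
  have "Psi_coef a b \<alpha> \<beta> n = c'"
    unfolding Psi_coef_def P_def[symmetric] using Pc' uniq by (rule the_equality)
  then have "(\<Sum>r = 0..n div 2. Psi_coef a b \<alpha> \<beta> n r * \<theta>^r) = (\<Sum>r = 0..m. c r * 1^(m-r) * \<theta>^r)"
    by (simp add: m_def c'_def)
  also have "\<dots> = Psi (a - \<alpha>*\<theta>) (b - \<beta>*\<theta>) n" using c[of 1 \<theta>] by simp
  finally show ?thesis .
qed

lemma main_Phi:
  fixes a b \<alpha> \<beta> \<theta> :: complex
  assumes D: "\<beta>*a - \<alpha>*b \<noteq> 0"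
  shows "(\<Sum>r = 0..(n - 1) div 2. Phi_coef a b \<alpha> \<beta> n r * \<theta>^r) = Phi (a - \<alpha>*\<theta>) (b - \<beta>*\<theta>) n"
proof -
  define m where "m = (n - 1) div 2"
  obtain c where c: "\<And>u v. Phi (a*u - \<alpha>*v) (b*u - \<beta>*v) n = (\<Sum>r = 0..m. c r * u^(m-r) * v^r)"
    using Phi_hom[of n a \<alpha> b \<beta>] unfolding hom_def m_def by metis
  define c' where "c' r = (if r \<le> m then c r else 0)" for r
  define P where "P = (\<lambda>c. (\<forall>r. (n - 1) div 2 < r \<longrightarrow> c r = 0) \<and>
     (\<forall>x y. ((x - y) * (x + y) ^ delta (n - 1)) \<noteq> 0 \<longrightarrow>
        (\<beta>*a - \<alpha>*b) ^ ((n - 1) div 2) * (x^n - y^n) / ((x - y) * (x + y) ^ delta (n - 1)) =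
        (\<Sum>r = 0..(n - 1) div 2. c r * (\<alpha>*x^2 + \<beta>*x*y + \<alpha>*y^2) ^ ((n - 1) div 2 - r)
                               * (a*x^2 + b*x*y + a*y^2) ^ r)))"
  have sumc': "(\<Sum>r = 0..m. c' r * (\<alpha>*x^2 + \<beta>*x*y + \<alpha>*y^2) ^ (m - r) * (a*x^2 + b*x*y + a*y^2) ^ r)
      = (\<beta>*a - \<alpha>*b) ^ m * Phi (x*y) (-(x^2+y^2)) n" for x y
  proof -
    define BB where "BB = \<alpha>*x^2+\<beta>*x*y+\<alpha>*y^2"
    define AA where "AA = a*x^2+b*x*y+a*y^2"
    have f1: "a*BB - \<alpha>*AA = (\<beta>*a - \<alpha>*b)*(x*y)" unfolding BB_def AA_def by (simp add: algebra_simps power2_eq_square)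
    have f2: "b*BB - \<beta>*AA = (\<beta>*a - \<alpha>*b)*(-(x^2+y^2))" unfolding BB_def AA_def by (simp add: algebra_simps power2_eq_square)
    have "(\<Sum>r = 0..m. c' r * BB ^ (m - r) * AA ^ r) = (\<Sum>r = 0..m. c r * BB ^ (m - r) * AA ^ r)"
      by (rule sum.cong) (auto simp: c'_def)
    also have "\<dots> = Phi (a*BB - \<alpha>*AA) (b*BB - \<beta>*AA) n" by (rule c[symmetric])
    also have "\<dots> = (\<beta>*a - \<alpha>*b) ^ m * Phi (x*y) (-(x^2+y^2)) n"
      unfolding f1 f2 Phi_scale m_def ..
    finally show ?thesis unfolding BB_def AA_def .
  qed
  have Pc': "P c'"
    unfolding P_def m_def[symmetric]
  proof (intro conjI allI impI)
    fix r assume "m < r" then show "c' r = 0" by (simp add: c'_def)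
  next
    fix x y :: complex assume h: "((x - y) * (x + y) ^ delta (n - 1)) \<noteq> 0"
    have "(\<beta>*a - \<alpha>*b) ^ m * (x^n - y^n) / ((x - y) * (x + y) ^ delta (n - 1)) = (\<beta>*a - \<alpha>*b) ^ m * Phi (x*y) (-(x^2+y^2)) n"
    proof -
      have e: "x^n-y^n = Phi (x*y) (-(x^2+y^2)) n * ((x - y) * (x + y) ^ delta (n - 1))" by (rule Phi_xy[symmetric])
      show ?thesis unfolding e using h by (simp del: power_eq_0_iff)
    qed
    then show "(\<beta>*a - \<alpha>*b) ^ m * (x^n - y^n) / ((x - y) * (x + y) ^ delta (n - 1)) =
        (\<Sum>r = 0..m. c' r * (\<alpha>*x^2 + \<beta>*x*y + \<alpha>*y^2) ^ (m - r) * (a*x^2 + b*x*y + a*y^2) ^ r)"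
      using sumc' by simp
  qed
  have uniq: "d = c'" if Pd: "P d" for d
  proof -
    have "\<forall>r\<le>m. d r - c' r = 0"
    proof (rule coef_unique[OF D])
      fix x y :: complex assume xy: "x + y \<noteq> 0" "x - y \<noteq> 0"
      then have h: "((x - y) * (x + y) ^ delta (n - 1)) \<noteq> 0" by simp
      have "(\<Sum>r = 0..m. d r * (\<alpha>*x^2 + \<beta>*x*y + \<alpha>*y^2) ^ (m - r) * (a*x^2 + b*x*y + a*y^2) ^ r)
          = (\<Sum>r = 0..m. c' r * (\<alpha>*x^2 + \<beta>*x*y + \<alpha>*y^2) ^ (m - r) * (a*x^2 + b*x*y + a*y^2) ^ r)"
      proof -
        have "\<forall>x y. ((x - y) * (x + y) ^ delta (n - 1)) \<noteq> 0 \<longrightarrow>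
        (\<beta>*a - \<alpha>*b) ^ m * (x^n - y^n) / ((x - y) * (x + y) ^ delta (n - 1)) =
        (\<Sum>r = 0..m. d r * (\<alpha>*x^2 + \<beta>*x*y + \<alpha>*y^2) ^ (m - r) * (a*x^2 + b*x*y + a*y^2) ^ r)"
          using Pd unfolding P_def m_def[symmetric] by (rule conjunct2)
        then have 1: "(\<beta>*a - \<alpha>*b) ^ m * (x^n - y^n) / ((x - y) * (x + y) ^ delta (n - 1)) =
        (\<Sum>r = 0..m. d r * (\<alpha>*x^2 + \<beta>*x*y + \<alpha>*y^2) ^ (m - r) * (a*x^2 + b*x*y + a*y^2) ^ r)"
          using h by blast
        have "\<forall>x y. ((x - y) * (x + y) ^ delta (n - 1)) \<noteq> 0 \<longrightarrow>
        (\<beta>*a - \<alpha>*b) ^ m * (x^n - y^n) / ((x - y) * (x + y) ^ delta (n - 1)) =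
        (\<Sum>r = 0..m. c' r * (\<alpha>*x^2 + \<beta>*x*y + \<alpha>*y^2) ^ (m - r) * (a*x^2 + b*x*y + a*y^2) ^ r)"
          using Pc' unfolding P_def m_def[symmetric] by (rule conjunct2)
        then have 2: "(\<beta>*a - \<alpha>*b) ^ m * (x^n - y^n) / ((x - y) * (x + y) ^ delta (n - 1)) =
        (\<Sum>r = 0..m. c' r * (\<alpha>*x^2 + \<beta>*x*y + \<alpha>*y^2) ^ (m - r) * (a*x^2 + b*x*y + a*y^2) ^ r)"
          using h by blast
        show ?thesis using 1 2 by simp
      qed
      then show "(\<Sum>r = 0..m. (d r - c' r) * (\<alpha>*x^2 + \<beta>*x*y + \<alpha>*y^2) ^ (m - r) * (a*x^2 + b*x*y + a*y^2) ^ r) = 0"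
        by (simp add: algebra_simps sum_subtractf)
    qed
    moreover have "\<forall>r>m. d r = 0" using Pd unfolding P_def m_def by simp
    ultimately show ?thesis by (auto simp: c'_def fun_eq_iff not_le)
  qed
  have "Phi_coef a b \<alpha> \<beta> n = c'"
    unfolding Phi_coef_def P_def[symmetric] using Pc' uniq by (rule the_equality)
  then have "(\<Sum>r = 0..(n - 1) div 2. Phi_coef a b \<alpha> \<beta> n r * \<theta>^r) = (\<Sum>r = 0..m. c r * 1^(m-r) * \<theta>^r)"
    by (simp add: m_def c'_def)
  also have "\<dots> = Phi (a - \<alpha>*\<theta>) (b - \<beta>*\<theta>) n" using c[of 1 \<theta>] by simp
  finally show ?thesis .
qed



theorem theorem10p1:
  fixes a b \<alpha> \<beta> \<theta> :: complex and n :: nat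
  assumes "\<beta>*a - \<alpha>*b \<noteq> 0" and "n \<ge> 1"
  shows "(\<Sum>r = 0..n div 2. Psi_coef a b \<alpha> \<beta> n r * \<theta>^r) = Psi (a - \<alpha>*\<theta>) (b - \<beta>*\<theta>) n
       \<and> (\<Sum>r = 0..(n - 1) div 2. Phi_coef a b \<alpha> \<beta> n r * \<theta>^r) = Phi (a - \<alpha>*\<theta>) (b - \<beta>*\<theta>) n"
  using main_Psi[OF assms(1)] main_Phi[OF assms(1)] by blast

end
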